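(* With the setting in the context, let $m\in\mathrm{hom}(C,G)_0$. The clock operator $Q_m$ distinguishes between ground states, in the sense that for every $f\in\ker(\delta^0)$ the vector $Q_m\mathcal A_0|f\rangle$ is a scalar multiple of $\mathcal A_0|f\rangle$, if and only if $m\in\ker(\delta_0)$, i.e. $m(\delta^{-1}t)=1$ for all $t\in\mathrm{hom}(C,G)^{-1}$.
   Context: $(C_\bullet,\partial^C_\bullet)$ is a chain complex with each $C_n$ free abelian on a finite set $K_n$, $K_n\ne\emptyset$ for finitely many $n$; $(G_\bullet,\partial^G_\bullet)$ is a chain complex of finite abelian groups. $\mathrm{hom}(C,G)^p=\prod_n\mathrm{Hom}(C_n,G_{n-p})$ with $(\delta^pf)_n=f_{n-1}\partial^C_n-(-1)^p\partial^G_{n-p}f_n$. $\mathrm{hom}(C,G)_p=\mathrm{Hom}(\mathrm{hom}(C,G)^p,U(1))$ (written additively), $\chi_m(f)=m(f)$, and $\delta_0:\mathrm{hom}(C,G)_0\to\mathrm{hom}(C,G)_{-1}$, $\delta_0m=m\circ\delta^{-1}$. $\mathcal H=\bigotimes_n\bigotimes_{x\in K_n}\mathbb C[G_n]$ with orthonormal basis $|f\rangle$, $f\in\mathrm{hom}(C,G)^0$. $Q_m|f\rangle=\chi_m(f)|f\rangle$, $P_t|f\rangle=|f+t\rangle$, $A_t=P_{\delta^{-1}t}$ for $t\in\mathrm{hom}(C,G)^{-1}$, and $\mathcal A_0=\frac1{|\mathrm{hom}(C,G)^{-1}|}\sum_{t\in\mathrm{hom}(C,G)^{-1}}A_t$.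 *)

theory Defs
  imports Complex_Main "HOL-Algebra.FiniteProduct"
begin

text \<open>
The chain complex C is given by finite sets of generators K n (n :: int) and
integer boundary coefficients dC n x y = coefficient of generator y in K (n-1)
in the boundary of the generator x in K n.
The finite abelian groups G n are HOL-Algebra commutative groups (written
multiplicatively) with boundary homomorphisms dG n : G n -> G (n-1).
An element f of hom(C,G)^p = prod_n Hom(C_n, G_(n-p)) is identified with the
values on generators: f n x in carrier (G (n-p)) for x in K n, and the
(irrelevant) value f n x is normalised to the unit of G (n-p) when x is not in K n.
\<close>

definition chain_setup ::
  "(int \<Rightarrow> 'k set) \<Rightarrow> (int \<Rightarrow> 'k \<Rightarrow> 'k \<Rightarrow> int)
   \<Rightarrow> (int \<Rightarrow> 'g monoid) \<Rightarrow> (int \<Rightarrow> 'g \<Rightarrow> 'g) \<Rightarrow> bool" where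
  "chain_setup K dC G dG \<longleftrightarrow>
     (\<forall>n. finite (K n)) \<and> finite {n. K n \<noteq> {}} \<and>
     (\<forall>n x z. x \<in> K n \<longrightarrow> z \<in> K (n - 2) \<longrightarrow>
        (\<Sum>y\<in>K (n - 1). dC n x y * dC (n - 1) y z) = 0) \<and>
     (\<forall>n. comm_group (G n) \<and> finite (carrier (G n))) \<and>
     (\<forall>n. dG n \<in> hom (G n) (G (n - 1))) \<and>
     (\<forall>n a. a \<in> carrier (G n) \<longrightarrow> dG (n - 1) (dG n a) = \<one>\<^bsub>G (n - 2)\<^esub>)"

definition cochains ::
  "(int \<Rightarrow> 'k set) \<Rightarrow> (int \<Rightarrow> 'g monoid) \<Rightarrow> int \<Rightarrow> (int \<Rightarrow> 'k \<Rightarrow> 'g) set" where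
  "cochains K G p = {f. \<forall>n x. (x \<in> K n \<longrightarrow> f n x \<in> carrier (G (n - p))) \<and>
                              (x \<notin> K n \<longrightarrow> f n x = \<one>\<^bsub>G (n - p)\<^esub>)}"

definition cochain_add ::
  "(int \<Rightarrow> 'g monoid) \<Rightarrow> int \<Rightarrow> (int \<Rightarrow> 'k \<Rightarrow> 'g) \<Rightarrow> (int \<Rightarrow> 'k \<Rightarrow> 'g) \<Rightarrow> (int \<Rightarrow> 'k \<Rightarrow> 'g)" where
  "cochain_add G p f g = (\<lambda>n x. f n x \<otimes>\<^bsub>G (n - p)\<^esub> g n x)"

definition cochain_zero :: "(int \<Rightarrow> 'g monoid) \<Rightarrow> int \<Rightarrow> (int \<Rightarrow> 'k \<Rightarrow> 'g)" where
  "cochain_zero G p = (\<lambda>n x. \<one>\<^bsub>G (n - p)\<^esub>)"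

text \<open>(delta^p f)_n = f_(n-1) o dC_n - (-1)^p dG_(n-p) o f_n, evaluated on generators x in K n
  (written multiplicatively in G (n-1-p)).\<close>
definition coboundary ::
  "(int \<Rightarrow> 'k set) \<Rightarrow> (int \<Rightarrow> 'k \<Rightarrow> 'k \<Rightarrow> int) \<Rightarrow> (int \<Rightarrow> 'g monoid) \<Rightarrow> (int \<Rightarrow> 'g \<Rightarrow> 'g)
   \<Rightarrow> int \<Rightarrow> (int \<Rightarrow> 'k \<Rightarrow> 'g) \<Rightarrow> (int \<Rightarrow> 'k \<Rightarrow> 'g)" where
  "coboundary K dC G dG p f = (\<lambda>n x.
     if x \<in> K n then
       (finprod (G (n - 1 - p)) (\<lambda>y. f (n - 1) y [^]\<^bsub>G (n - 1 - p)\<^esub> dC n x y) (K (n - 1)))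
       \<otimes>\<^bsub>G (n - 1 - p)\<^esub>
       (if even p then inv\<^bsub>G (n - 1 - p)\<^esub> (dG (n - p) (f n x)) else dG (n - p) (f n x))
     else \<one>\<^bsub>G (n - 1 - p)\<^esub>)"

text \<open>hom(C,G)_0: characters hom(C,G)^0 -> U(1), U(1) realised as unit complex numbers.\<close>
definition character ::
  "(int \<Rightarrow> 'k set) \<Rightarrow> (int \<Rightarrow> 'g monoid) \<Rightarrow> ((int \<Rightarrow> 'k \<Rightarrow> 'g) \<Rightarrow> complex) \<Rightarrow> bool" where
  "character K G m \<longleftrightarrow>
     (\<forall>f\<in>cochains K G 0. cmod (m f) = 1) \<and>
     (\<forall>f\<in>cochains K G 0. \<forall>g\<in>cochains K G 0. m (cochain_add G 0 f g) = m f * m g)"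

text \<open>The Hilbert space H with orthonormal basis |f>, f in hom(C,G)^0, is realised as
  coefficient functions hom(C,G)^0 -> complex; ket f is the basis vector |f>.\<close>
definition ket :: "(int \<Rightarrow> 'k \<Rightarrow> 'g) \<Rightarrow> ((int \<Rightarrow> 'k \<Rightarrow> 'g) \<Rightarrow> complex)" where
  "ket f = (\<lambda>g. if g = f then 1 else 0)"

definition clockQ ::
  "((int \<Rightarrow> 'k \<Rightarrow> 'g) \<Rightarrow> complex) \<Rightarrow> ((int \<Rightarrow> 'k \<Rightarrow> 'g) \<Rightarrow> complex) \<Rightarrow> ((int \<Rightarrow> 'k \<Rightarrow> 'g) \<Rightarrow> complex)" where
  "clockQ m \<psi> = (\<lambda>g. m g * \<psi> g)"

text \<open>Shift operator P_t |f> = |f + t>, extended linearly.\<close>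
definition shiftP ::
  "(int \<Rightarrow> 'k set) \<Rightarrow> (int \<Rightarrow> 'g monoid) \<Rightarrow> (int \<Rightarrow> 'k \<Rightarrow> 'g)
   \<Rightarrow> ((int \<Rightarrow> 'k \<Rightarrow> 'g) \<Rightarrow> complex) \<Rightarrow> ((int \<Rightarrow> 'k \<Rightarrow> 'g) \<Rightarrow> complex)" where
  "shiftP K G t \<psi> = (\<lambda>g. \<Sum>f\<in>{f\<in>cochains K G 0. cochain_add G 0 f t = g}. \<psi> f)"

definition opA where
  "opA K dC G dG t = shiftP K G (coboundary K dC G dG (-1) t)"

definition projA0 ::
  "(int \<Rightarrow> 'k set) \<Rightarrow> (int \<Rightarrow> 'k \<Rightarrow> 'k \<Rightarrow> int) \<Rightarrow> (int \<Rightarrow> 'g monoid) \<Rightarrow> (int \<Rightarrow> 'g \<Rightarrow> 'g)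
   \<Rightarrow> ((int \<Rightarrow> 'k \<Rightarrow> 'g) \<Rightarrow> complex) \<Rightarrow> ((int \<Rightarrow> 'k \<Rightarrow> 'g) \<Rightarrow> complex)" where
  "projA0 K dC G dG \<psi> = (\<lambda>g. (\<Sum>t\<in>cochains K G (-1). opA K dC G dG t \<psi> g)
                                / of_nat (card (cochains K G (-1))))"

end

theory Submission
  imports Defs
begin

lemma cs_group: "chain_setup K dC G dG \<Longrightarrow> comm_group (G n)"
  by (simp add: chain_setup_def)

lemma cs_hom: "chain_setup K dC G dG \<Longrightarrow> dG n \<in> hom (G n) (G (n - 1))"
  by (simp add: chain_setup_def)

lemma finite_cochains:
  assumes cs: "chain_setup K dC G dG"
  shows "finite (cochains K G p)"
proof -
  let ?S = "{n. K n \<noteq> {}}"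
  let ?h = "\<lambda>f. restrict (\<lambda>(n,x). f n x) (Sigma ?S K)"
  have fS: "finite (Sigma ?S K)" using cs by (auto simp: chain_setup_def)
  have inj: "inj_on ?h (cochains K G p)"
  proof (rule inj_onI)
    fix f g assume f: "f \<in> cochains K G p" and g: "g \<in> cochains K G p" and e: "?h f = ?h g"
    show "f = g"
    proof (intro ext)
      fix n x
      show "f n x = g n x"
      proof (cases "x \<in> K n")
        case True
        hence "(n,x) \<in> Sigma ?S K" by auto
        from fun_cong[OF e, of "(n,x)"] this show ?thesis by simp
      next
        case False
        with f g show ?thesis by (simp add: cochains_def)
      qed
    qed
  qed
  have sub: "?h ` cochains K G p \<subseteq> PiE (Sigma ?S K) (\<lambda>(n,x). carrier (G (n - p)))"
  proof (rule image_subsetI)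
    fix f assume f: "f \<in> cochains K G p"
    show "?h f \<in> PiE (Sigma ?S K) (\<lambda>(n,x). carrier (G (n - p)))"
      unfolding restrict_PiE_iff using f by (auto simp: cochains_def)
  qed
  have "finite (PiE (Sigma ?S K) (\<lambda>(n,x). carrier (G (n - p))))"
    using fS cs by (intro finite_PiE) (auto simp: chain_setup_def)
  hence "finite (?h ` cochains K G p)" using sub finite_subset by blast
  thus ?thesis using inj finite_imageD by blast
qed

lemma delta_closed:
  assumes cs: "chain_setup K dC G dG" and t: "t \<in> cochains K G (-1)"
  shows "coboundary K dC G dG (-1) t \<in> cochains K G 0"
proof -
  have "coboundary K dC G dG (-1) t n x \<in> carrier (G n)" if x: "x \<in> K n" for n x
  proof -
    interpret cg: comm_group "G n" using cs_group[OF cs] .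
    have h: "dG (n+1) \<in> hom (G (n+1)) (G n)" using cs_hom[OF cs, of "n+1"] by simp
    have tx: "t n x \<in> carrier (G (n+1))" using t x by (simp add: cochains_def)
    have ty: "t (n - 1) y \<in> carrier (G n)" for y
    proof -
      have "(y \<in> K (n-1) \<longrightarrow> t (n-1) y \<in> carrier (G (n - 1 - -1))) \<and>
            (y \<notin> K (n-1) \<longrightarrow> t (n-1) y = \<one>\<^bsub>G (n - 1 - -1)\<^esub>)"
        using t unfolding cochains_def by blast
      thus ?thesis by (cases "y \<in> K (n-1)") auto
    qed
    have "dG (n+1) (t n x) \<in> carrier (G n)" using h tx by (rule hom_in_carrier)
    moreover have "finprod (G n) (\<lambda>y. t (n - 1) y [^]\<^bsub>G n\<^esub> dC n x y) (K (n - 1)) \<in> carrier (G n)"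
      by (rule cg.finprod_closed) (auto intro: cg.int_pow_closed ty)
    ultimately show ?thesis using x by (simp add: coboundary_def)
  qed
  moreover have "coboundary K dC G dG (-1) t n x = \<one>\<^bsub>G n\<^esub>" if "x \<notin> K n" for n x
    using that by (simp add: coboundary_def)
  ultimately show ?thesis by (simp add: cochains_def)
qed


lemma dG_one:
  assumes cs: "chain_setup K dC G dG"
  shows "dG n \<one>\<^bsub>G n\<^esub> = \<one>\<^bsub>G (n - 1)\<^esub>"
proof -
  interpret gh: group_hom "G n" "G (n - 1)" "dG n"
    using cs_group[OF cs, of n] cs_group[OF cs, of "n-1"] cs_hom[OF cs, of n]
    by (simp add: group_hom_def group_hom_axioms_def comm_group_def)
  show ?thesis by simp
qed

lemma zero_in: "chain_setup K dC G dG \<Longrightarrow> cochain_zero G p \<in> cochains K G p"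
  using cs_group by (simp add: cochains_def cochain_zero_def comm_group_def group_def monoid.one_closed) blast

lemma delta_zero_m1:
  assumes cs: "chain_setup K dC G dG"
  shows "coboundary K dC G dG (-1) (cochain_zero G (-1)) = cochain_zero G 0"
proof (intro ext)
  fix n x
  interpret cg: comm_group "G n" using cs_group[OF cs] .
  have "finprod (G n) (\<lambda>y. \<one>\<^bsub>G n\<^esub> [^]\<^bsub>G n\<^esub> dC n x y) (K (n - 1)) = \<one>\<^bsub>G n\<^esub>"
    by (rule cg.finprod_one_eqI) simp
  moreover have "dG (n+1) \<one>\<^bsub>G (n+1)\<^esub> = \<one>\<^bsub>G n\<^esub>" using dG_one[OF cs, of "n+1"] by simp
  ultimately show "coboundary K dC G dG (-1) (cochain_zero G (-1)) n x = cochain_zero G 0 n x"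
    by (simp add: coboundary_def cochain_zero_def)
qed

lemma delta_zero_0:
  assumes cs: "chain_setup K dC G dG"
  shows "coboundary K dC G dG 0 (cochain_zero G 0) = cochain_zero G 1"
proof (intro ext)
  fix n x
  interpret cg: comm_group "G (n - 1)" using cs_group[OF cs] .
  have "finprod (G (n - 1)) (\<lambda>y. \<one>\<^bsub>G (n - 1)\<^esub> [^]\<^bsub>G (n - 1)\<^esub> dC n x y) (K (n - 1)) = \<one>\<^bsub>G (n - 1)\<^esub>"
    by (rule cg.finprod_one_eqI) simp
  moreover have "dG n \<one>\<^bsub>G n\<^esub> = \<one>\<^bsub>G (n - 1)\<^esub>" using dG_one[OF cs, of n] by simp
  ultimately show "coboundary K dC G dG 0 (cochain_zero G 0) n x = cochain_zero G 1 n x"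
    by (simp add: coboundary_def cochain_zero_def)
qed

lemma projA0_ket:
  assumes cs: "chain_setup K dC G dG" and f: "f \<in> cochains K G 0"
  shows "projA0 K dC G dG (ket f) g =
    of_nat (card {t\<in>cochains K G (-1). cochain_add G 0 f (coboundary K dC G dG (-1) t) = g})
    / of_nat (card (cochains K G (-1)))"
proof -
  have "opA K dC G dG t (ket f) g = (if cochain_add G 0 f (coboundary K dC G dG (-1) t) = g then 1 else 0)" for t
  proof -
    let ?A = "{f'\<in>cochains K G 0. cochain_add G 0 f' (coboundary K dC G dG (-1) t) = g}"
    have "finite ?A" using finite_cochains[OF cs, of 0] by simp
    hence "(\<Sum>f'\<in>?A. ket f f') = (if f \<in> ?A then 1 else 0)"
      unfolding ket_def by (simp add: sum.delta')
    thus ?thesis using f by (simp add: opA_def shiftP_def)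
  qed
  hence "(\<Sum>t\<in>cochains K G (-1). opA K dC G dG t (ket f) g) =
     (\<Sum>t\<in>cochains K G (-1). if cochain_add G 0 f (coboundary K dC G dG (-1) t) = g then 1 else 0)"
    by simp
  also have "\<dots> = of_nat (card {t\<in>cochains K G (-1). cochain_add G 0 f (coboundary K dC G dG (-1) t) = g})"
    using finite_cochains[OF cs, of "-1"] by (simp add: sum.inter_filter[symmetric])
  finally show ?thesis by (simp add: projA0_def)
qed

lemma add_zero:
  assumes cs: "chain_setup K dC G dG" and h: "h \<in> cochains K G 0"
  shows "cochain_add G 0 (cochain_zero G 0) h = h"
proof (intro ext)
  fix n x
  interpret cg: comm_group "G n" using cs_group[OF cs] .
  have "h n x \<in> carrier (G n)" using h by (cases "x \<in> K n") (auto simp: cochains_def)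
  thus "cochain_add G 0 (cochain_zero G 0) h n x = h n x"
    by (simp add: cochain_add_def cochain_zero_def)
qed

theorem proposition6:
  fixes K :: "int \<Rightarrow> 'k set" and dC :: "int \<Rightarrow> 'k \<Rightarrow> 'k \<Rightarrow> int"
    and G :: "int \<Rightarrow> 'g monoid" and dG :: "int \<Rightarrow> 'g \<Rightarrow> 'g"
    and m :: "(int \<Rightarrow> 'k \<Rightarrow> 'g) \<Rightarrow> complex"
  assumes "chain_setup K dC G dG"
    and "character K G m"
  shows "(\<forall>f\<in>cochains K G 0. coboundary K dC G dG 0 f = cochain_zero G 1 \<longrightarrow>
            (\<exists>c::complex. clockQ m (projA0 K dC G dG (ket f))
                           = (\<lambda>g. c * projA0 K dC G dG (ket f) g)))
         \<longleftrightarrow> (\<forall>t\<in>cochains K G (-1). m (coboundary K dC G dG (-1) t) = 1)"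
proof -
  note cs = assms(1)
  have mabs: "\<And>f. f \<in> cochains K G 0 \<Longrightarrow> cmod (m f) = 1"
    and mmul: "\<And>f g. f \<in> cochains K G 0 \<Longrightarrow> g \<in> cochains K G 0 \<Longrightarrow> m (cochain_add G 0 f g) = m f * m g"
    using assms(2) by (auto simp: character_def)
  let ?T = "cochains K G (-1)"
  let ?d = "coboundary K dC G dG (-1)"
  have finT: "finite ?T" by (rule finite_cochains[OF cs])
  show ?thesis
  proof
    assume L: "\<forall>f\<in>cochains K G 0. coboundary K dC G dG 0 f = cochain_zero G 1 \<longrightarrow>
            (\<exists>c::complex. clockQ m (projA0 K dC G dG (ket f))
                           = (\<lambda>g. c * projA0 K dC G dG (ket f) g))"
    let ?f0 = "cochain_zero G 0 :: int \<Rightarrow> 'k \<Rightarrow> 'g"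
    have f0: "?f0 \<in> cochains K G 0" by (rule zero_in[OF cs])
    obtain c where c: "clockQ m (projA0 K dC G dG (ket ?f0)) = (\<lambda>g. c * projA0 K dC G dG (ket ?f0) g)"
      using L f0 delta_zero_0[OF cs] by blast
    have Tne: "card ?T \<noteq> 0" using finT zero_in[OF cs, of "-1"] by auto
    have key: "m (cochain_add G 0 ?f0 (?d t)) = c" if t: "t \<in> ?T" for t
    proof -
      let ?g = "cochain_add G 0 ?f0 (?d t)"
      have "t \<in> {t'\<in>?T. cochain_add G 0 ?f0 (?d t') = ?g}" using t by simp
      hence "card {t'\<in>?T. cochain_add G 0 ?f0 (?d t') = ?g} \<noteq> 0" using finT by auto
      hence ne: "projA0 K dC G dG (ket ?f0) ?g \<noteq> 0"
        using Tne by (simp add: projA0_ket[OF cs f0])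
      from fun_cong[OF c, of ?g] have "m ?g * projA0 K dC G dG (ket ?f0) ?g = c * projA0 K dC G dG (ket ?f0) ?g"
        by (simp add: clockQ_def)
      thus ?thesis using ne by simp
    qed
    show "\<forall>t\<in>?T. m (?d t) = 1"
    proof
      fix t assume t: "t \<in> ?T"
      have z: "cochain_zero G (-1) \<in> ?T" by (rule zero_in[OF cs])
      have m0: "m ?f0 = m ?f0 * m ?f0" using mmul[OF f0 f0] add_zero[OF cs f0] by simp
      have "m ?f0 \<noteq> 0" using mabs[OF f0] by auto
      with m0 have m01: "m ?f0 = 1" by simp
      have "c = 1" using key[OF z] add_zero[OF cs f0] m01 by (simp add: delta_zero_m1[OF cs])
      thus "m (?d t) = 1" using key[OF t] add_zero[OF cs delta_closed[OF cs t]] by simp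
    qed
  next
    assume R: "\<forall>t\<in>?T. m (?d t) = 1"
    show "\<forall>f\<in>cochains K G 0. coboundary K dC G dG 0 f = cochain_zero G 1 \<longrightarrow>
            (\<exists>c::complex. clockQ m (projA0 K dC G dG (ket f))
                           = (\<lambda>g. c * projA0 K dC G dG (ket f) g))"
    proof (intro ballI impI exI ext)
      fix f g assume f: "f \<in> cochains K G 0"
      have "m g * of_nat (card {t\<in>?T. cochain_add G 0 f (?d t) = g})
          = m f * of_nat (card {t\<in>?T. cochain_add G 0 f (?d t) = g})"
      proof (cases "{t\<in>?T. cochain_add G 0 f (?d t) = g} = {}")
        case True
        hence "card {t\<in>?T. cochain_add G 0 f (?d t) = g} = 0" by (simp only: card.empty)
        thus ?thesis by simp
      next
        case False
        then obtain t where t: "t \<in> ?T" "cochain_add G 0 f (?d t) = g" by auto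
        have "m g = m f" using t mmul[OF f delta_closed[OF cs t(1)]] R by auto
        thus ?thesis by simp
      qed
      thus "clockQ m (projA0 K dC G dG (ket f)) g = m f * projA0 K dC G dG (ket f) g"
        by (simp add: clockQ_def projA0_ket[OF cs f])
    qed
  qed
qed

end
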